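(* If $n\ge3$ and $L$ is a left ideal or a suffix-closed language with $n$ quotients, then $\sigma(L)\le n^{n-1}+n-1$.
   Context: A left ideal is a nonempty $L\subseteq\Sigma^*$ with $L=\Sigma^*L$; $L$ is suffix-closed if $w\in L$ implies every suffix of $w$ is in $L$. The quotients of $L$ are $w^{-1}L=\{x: wx\in L\}$. $\sigma(L)$ is the cardinality of the syntactic semigroup $\Sigma^+/\approx_L$, where $x\approx_L y$ iff $uxv\in L\Leftrightarrow uyv\in L$ for all $u,v$ (equivalently, the size of the transition semigroup of the minimal DFA of $L$). *)

theory Defs
  imports Main
begin

definition lquot :: "'a list \<Rightarrow> 'a list set \<Rightarrow> 'a list set" where
  "lquot w L = {x. w @ x \<in> L}"

definition quotients :: "'a list set \<Rightarrow> 'a list set set" where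
  "quotients L = {lquot w L | w. True}"

definition left_ideal :: "'a list set \<Rightarrow> bool" where
  "left_ideal L \<longleftrightarrow> L \<noteq> {} \<and> L = {u @ v | u v. v \<in> L}"

definition suffix_closed :: "'a list set \<Rightarrow> bool" where
  "suffix_closed L \<longleftrightarrow> (\<forall>u v. u @ v \<in> L \<longrightarrow> v \<in> L)"

definition synt_cong :: "'a list set \<Rightarrow> ('a list \<times> 'a list) set" where
  "synt_cong L = {(x, y). x \<noteq> [] \<and> y \<noteq> [] \<and>
                    (\<forall>u v. (u @ x @ v \<in> L) \<longleftrightarrow> (u @ y @ v \<in> L))}"

definition synt_semigroup_size :: "'a list set \<Rightarrow> nat" where
  "synt_semigroup_size L = card ({x. x \<noteq> []} // synt_cong L)"

end

theory Submission
  imports Defs "HOL-Library.FuncSet"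
begin


lemma bin3:
  fixes a m :: nat
  shows "2*a^(m+2) + 2*(m+2)*a^(m+1) + (m+2)*(m+1)*a^m \<le> 2*(a+1)^(m+2)"
proof (induction m)
  case 0
  then show ?case by (simp add: power2_eq_square algebra_simps)
next
  case (Suc m)
  have eq: "(a+1)*(2*a^(m+2) + 2*(m+2)*a^(m+1) + (m+2)*(m+1)*a^m)
     = (2*a^(Suc m+2) + 2*(Suc m+2)*a^(Suc m+1) + (Suc m+2)*(Suc m+1)*a^(Suc m)) + (m+2)*(m+1)*a^m"
    by (simp add: algebra_simps)
  have "(a+1)*(2*a^(m+2) + 2*(m+2)*a^(m+1) + (m+2)*(m+1)*a^m) \<le> (a+1)*(2*(a+1)^(m+2))"
    using Suc.IH by (rule mult_left_mono) simp
  then show ?case using eq by (simp add: algebra_simps)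
qed

lemma bin2:
  fixes a m :: nat
  shows "a^(m+1) + (m+1)*a^m \<le> (a+1)^(m+1)"
proof (induction m)
  case 0 then show ?case by simp
next
  case (Suc m)
  have eq: "(a+1)*(a^(m+1) + (m+1)*a^m) = (a^(Suc m+1) + (Suc m+1)*a^(Suc m)) + (m+1)*a^m"
    by (simp add: algebra_simps)
  have "(a+1)*(a^(m+1) + (m+1)*a^m) \<le> (a+1)*(a+1)^(m+1)"
    using Suc.IH by (rule mult_left_mono) simp
  then show ?case using eq by (simp add: algebra_simps)
qed

lemma key9: assumes "k \<ge> 2" shows "9 * k^k \<le> 4 * (k+1)^(k::nat)"
proof -
  obtain m where m: "k = m + 2" using assms by (metis add.commute le_add_diff_inverse)
  have b: "2*k^(m+2) + 2*(m+2)*k^(m+1) + (m+2)*(m+1)*k^m \<le> 2*(k+1)^(m+2)" by (rule bin3)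
  have e1: "(m+2)*k^(m+1) = k^(m+2)" using m by (simp add: algebra_simps)
  have e2: "(m+2)*(m+1)*k^m = (m+1)*k^(m+1)" using m by (simp add: algebra_simps)
  have "k^(m+2) \<le> 2*(m+1)*k^(m+1)"
  proof -
    have "k^(m+2) = k * k^(m+1)" by simp
    also have "\<dots> \<le> 2*(m+1)*k^(m+1)" using m by (intro mult_right_mono) auto
    finally show ?thesis .
  qed
  then show ?thesis using b e1 e2 m by simp
qed

lemma key3: assumes "k \<ge> 2" shows "3 * k^(k-1) \<le> 2 * (k+1)^(k-1::nat)"
proof -
  obtain m where m: "k = m + 2" using assms by (metis add.commute le_add_diff_inverse)
  have b: "k^(m+1) + (m+1)*k^m \<le> (k+1)^(m+1)" by (rule bin2)
  have "k^(m+1) \<le> 2*(m+1)*k^m"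
  proof -
    have "k^(m+1) = k * k^m" by simp
    also have "\<dots> \<le> 2*(m+1)*k^m" using m by (intro mult_right_mono) auto
    finally show ?thesis .
  qed
  then show ?thesis using b m by simp
qed



lemma ratio9: assumes "1 \<le> j" "j < n" "3 \<le> n" shows "9 * j^(n-1) \<le> 4 * (j+1)^(n-1::nat)"
proof -
  let ?e = "n-1"
  have "j*n \<le> (j+1)*(n-1)" using assms by (simp add: algebra_simps)
  hence a: "(j*n)^?e \<le> ((j+1)*(n-1))^?e" by (rule power_mono) simp
  have k: "9 * (n-1)^(n-1) \<le> 4 * (n-1+1)^(n-1)" using key9[of "n-1"] assms by simp
  have "9 * j^?e * n^?e = 9 * (j*n)^?e" by (simp add: power_mult_distrib)
  also have "\<dots> \<le> 9 * ((j+1)*(n-1))^?e" using a by simp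
  also have "\<dots> = (j+1)^?e * (9 * (n-1)^?e)" by (simp only: power_mult_distrib mult_ac)
  also have "\<dots> \<le> (j+1)^?e * (4 * n^?e)" using k assms by (intro mult_left_mono) auto
  finally have "(9 * j^?e) * n^?e \<le> (4 * (j+1)^?e) * n^?e" by (simp add: algebra_simps)
  moreover have "n^?e > 0" using assms by simp
  ultimately show ?thesis by simp
qed

lemma ratio3: assumes "1 \<le> j" "j < n" "3 \<le> n" shows "3 * j^(n-2) \<le> 2 * (j+1)^(n-2::nat)"
proof -
  let ?e = "n-2"
  have "j*n \<le> (j+1)*(n-1)" using assms by (simp add: algebra_simps)
  hence a: "(j*n)^?e \<le> ((j+1)*(n-1))^?e" by (rule power_mono) simp
  have k: "3 * (n-1)^(n-2) \<le> 2 * (n-1+1)^(n-2)" using key3[of "n-1"] assms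
    by (simp add: numeral_2_eq_2)
  have "3 * j^?e * n^?e = 3 * (j*n)^?e" by (simp add: power_mult_distrib)
  also have "\<dots> \<le> 3 * ((j+1)*(n-1))^?e" using a by simp
  also have "\<dots> = (j+1)^?e * (3 * (n-1)^?e)" by (simp only: power_mult_distrib mult_ac)
  also have "\<dots> \<le> (j+1)^?e * (2 * n^?e)" using k assms by (intro mult_left_mono) auto
  finally have "(3 * j^?e) * n^?e \<le> (2 * (j+1)^?e) * n^?e" by (simp add: algebra_simps)
  moreover have "n^?e > 0" using assms by simp
  ultimately show ?thesis by simp
qed

lemma sumS1: assumes "3 \<le> n" shows "k \<le> n \<Longrightarrow> 5 * (\<Sum>j=1..k. j^(n-1)) \<le> 9 * k^(n-1::nat)"
proof (induction k)
  case 0 then show ?case by simp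
next
  case (Suc k)
  show ?case
  proof (cases "k = 0")
    case True then show ?thesis by simp
  next
    case False
    have "5 * (\<Sum>j=1..Suc k. j^(n-1)) = 5 * (\<Sum>j=1..k. j^(n-1)) + 5 * (Suc k)^(n-1)" by simp
    also have "\<dots> \<le> 9 * k^(n-1) + 5 * (Suc k)^(n-1)" using Suc by simp
    also have "\<dots> \<le> 4 * (k+1)^(n-1) + 5 * (Suc k)^(n-1)" using ratio9[of k n] False Suc.prems assms by simp
    finally show ?thesis by simp
  qed
qed

lemma sumS2: assumes "3 \<le> n" shows "k \<le> n \<Longrightarrow> (\<Sum>j=1..k. j^(n-2)) \<le> 3 * k^(n-2::nat)"
proof (induction k)
  case 0 then show ?case by simp
next
  case (Suc k)
  show ?case
  proof (cases "k = 0")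
    case True then show ?thesis by simp
  next
    case False
    have "3 * (\<Sum>j=1..Suc k. j^(n-2)) = 3 * (\<Sum>j=1..k. j^(n-2)) + 3 * (Suc k)^(n-2)" by simp
    also have "\<dots> \<le> 9 * k^(n-2) + 3 * (Suc k)^(n-2)" using Suc by simp
    also have "\<dots> \<le> 6 * (k+1)^(n-2) + 3 * (Suc k)^(n-2)" using ratio3[of k n] False Suc.prems assms by simp
    finally show ?thesis by simp
  qed
qed

lemma big: assumes "15 \<le> n" shows "(\<Sum>j=1..n. (j+1) * j^(n-2)) \<le> 2 * n^(n-1::nat)"
proof -
  have "(\<Sum>j=1..n. (j+1) * j^(n-2)) = (\<Sum>j=1..n. j^(n-1)) + (\<Sum>j=1..n. j^(n-2))"
  proof -
    have "\<And>j::nat. (j+1) * j^(n-2) = j^(n-1) + j^(n-2)"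
    proof -
      fix j :: nat
      have "n - 1 = Suc (n-2)" using assms by simp
      then have "j * j^(n-2) = j^(n-1)" by simp
      then show "(j+1) * j^(n-2) = j^(n-1) + j^(n-2)" by (simp add: distrib_right)
    qed
    then show ?thesis by (simp add: sum.distrib)
  qed
  moreover have "5 * (\<Sum>j=1..n. j^(n-1)) \<le> 9 * n^(n-1)" using sumS1 assms by simp
  moreover have "(\<Sum>j=1..n. j^(n-2)) \<le> 3 * n^(n-2)" using sumS2 assms by simp
  moreover have "15 * n^(n-2) \<le> n^(n-1)"
  proof -
    have "n - 1 = Suc (n-2)" using assms by simp
    then have "n^(n-1) = n * n^(n-2)" by simp
    then show ?thesis using assms by simp
  qed
  ultimately show ?thesis by linarith
qed

lemma small_3: "(\<Sum>j=1..(3::nat). (j+1)*j^(3-2)) \<le> 2*(3^(3-1)+3-1)"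
proof -
  have "{1..3::nat} = {1,2,3}" by (auto; presburger)
  then show ?thesis by simp
qed

lemma small_4: "(\<Sum>j=1..(4::nat). (j+1)*j^(4-2)) \<le> 2*(4^(4-1)+4-1)"
proof -
  have "{1..4::nat} = {1,2,3,4}" by (auto; presburger)
  then show ?thesis by simp
qed

lemma small_5: "(\<Sum>j=1..(5::nat). (j+1)*j^(5-2)) \<le> 2*(5^(5-1)+5-1)"
proof -
  have "{1..5::nat} = {1,2,3,4,5}" by (auto; presburger)
  then show ?thesis by simp
qed

lemma small_6: "(\<Sum>j=1..(6::nat). (j+1)*j^(6-2)) \<le> 2*(6^(6-1)+6-1)"
proof -
  have "{1..6::nat} = {1,2,3,4,5,6}" by (auto; presburger)
  then show ?thesis by simp
qed

lemma small_7: "(\<Sum>j=1..(7::nat). (j+1)*j^(7-2)) \<le> 2*(7^(7-1)+7-1)"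
proof -
  have "{1..7::nat} = {1,2,3,4,5,6,7}" by (auto; presburger)
  then show ?thesis by simp
qed

lemma small_8: "(\<Sum>j=1..(8::nat). (j+1)*j^(8-2)) \<le> 2*(8^(8-1)+8-1)"
proof -
  have "{1..8::nat} = {1,2,3,4,5,6,7,8}" by (auto; presburger)
  then show ?thesis by simp
qed

lemma small_9: "(\<Sum>j=1..(9::nat). (j+1)*j^(9-2)) \<le> 2*(9^(9-1)+9-1)"
proof -
  have "{1..9::nat} = {1,2,3,4,5,6,7,8,9}" by (auto; presburger)
  then show ?thesis by simp
qed

lemma small_10: "(\<Sum>j=1..(10::nat). (j+1)*j^(10-2)) \<le> 2*(10^(10-1)+10-1)"
proof -
  have "{1..10::nat} = {1,2,3,4,5,6,7,8,9,10}" by (auto; presburger)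
  then show ?thesis by simp
qed

lemma small_11: "(\<Sum>j=1..(11::nat). (j+1)*j^(11-2)) \<le> 2*(11^(11-1)+11-1)"
proof -
  have "{1..11::nat} = {1,2,3,4,5,6,7,8,9,10,11}" by (auto; presburger)
  then show ?thesis by simp
qed

lemma small_12: "(\<Sum>j=1..(12::nat). (j+1)*j^(12-2)) \<le> 2*(12^(12-1)+12-1)"
proof -
  have "{1..12::nat} = {1,2,3,4,5,6,7,8,9,10,11,12}" by (auto; presburger)
  then show ?thesis by simp
qed

lemma small_13: "(\<Sum>j=1..(13::nat). (j+1)*j^(13-2)) \<le> 2*(13^(13-1)+13-1)"
proof -
  have "{1..13::nat} = {1,2,3,4,5,6,7,8,9,10,11,12,13}" by (auto; presburger)
  then show ?thesis by simp
qed

lemma small_14: "(\<Sum>j=1..(14::nat). (j+1)*j^(14-2)) \<le> 2*(14^(14-1)+14-1)"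
proof -
  have "{1..14::nat} = {1,2,3,4,5,6,7,8,9,10,11,12,13,14}" by (auto; presburger)
  then show ?thesis by simp
qed

lemma small: assumes "3 \<le> n" "n \<le> 14"
  shows "(\<Sum>j=1..n. (j+1) * j^(n-2)) \<le> 2 * (n^(n-1) + n - 1::nat)"
proof -
  have "n = 3 \<or> n = 4 \<or> n = 5 \<or> n = 6 \<or> n = 7 \<or> n = 8 \<or> n = 9 \<or> n = 10 \<or> n = 11 \<or> n = 12 \<or> n = 13 \<or> n = 14" using assms by presburger
  then show ?thesis using small_3 small_4 small_5 small_6 small_7 small_8 small_9 small_10 small_11 small_12 small_13 small_14 by (elim disjE) simp_all
qed



lemma analytic: assumes "3 \<le> n" shows "(\<Sum>j=1..n. (j+1) * j^(n-2)) \<le> 2 * (n^(n-1) + n - 1::nat)"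
proof (cases "n \<le> 14")
  case True then show ?thesis using small assms by blast
next
  case False
  then have "(\<Sum>j=1..n. (j+1) * j^(n-2)) \<le> 2 * n^(n-1)" using big by simp
  moreover have "2 * n^(n-1) \<le> 2 * (n^(n-1) + n - 1)" using assms by simp
  ultimately show ?thesis by (rule order.trans)
qed

lemma rearr:
  fixes S :: "'b::order set" and h :: "nat \<Rightarrow> nat"
  assumes "finite S" "mono h"
  shows "(\<Sum>p\<in>S. h (card {x\<in>S. p \<le> x})) \<le> (\<Sum>j=1..card S. h j)"
  using assms
proof (induction "card S" arbitrary: S h)
  case 0
  then show ?case by simp
next
  case (Suc k)
  then have "S \<noteq> {}" by auto
  then obtain x where xS: "x \<in> S" and xmax: "\<forall>b\<in>S. x \<le> b \<longrightarrow> x = b"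
    using finite_has_maximal[OF Suc.prems(1)] by blast
  define S' where "S' = S - {x}"
  have fS': "finite S'" using Suc.prems S'_def by simp
  have cS': "card S' = k" using Suc.hyps(2) xS S'_def by simp
  have monoh: "mono (h \<circ> Suc)" using Suc.prems(2) by (simp add: mono_def)
  have IH: "(\<Sum>p\<in>S'. (h \<circ> Suc) (card {y\<in>S'. p \<le> y})) \<le> (\<Sum>j=1..k. (h \<circ> Suc) j)"
    using Suc.hyps(1)[OF cS'[symmetric] fS' monoh] cS' by simp
  have one: "{y\<in>S. x \<le> y} = {x}" using xS xmax by auto
  have two: "h (card {y\<in>S. p \<le> y}) \<le> (h \<circ> Suc) (card {y\<in>S'. p \<le> y})" if "p \<in> S'" for p
  proof -
    have "{y\<in>S. p \<le> y} \<subseteq> insert x {y\<in>S'. p \<le> y}" using S'_def by auto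
    hence "card {y\<in>S. p \<le> y} \<le> card (insert x {y\<in>S'. p \<le> y})"
      by (rule card_mono[rotated]) (simp add: fS')
    also have "\<dots> \<le> Suc (card {y\<in>S'. p \<le> y})" by (simp add: card_insert_if fS')
    finally show ?thesis using Suc.prems(2) by (simp add: mono_def)
  qed
  have "(\<Sum>p\<in>S. h (card {y\<in>S. p \<le> y})) = h (card {y\<in>S. x \<le> y}) + (\<Sum>p\<in>S'. h (card {y\<in>S. p \<le> y}))"
    using Suc.prems(1) xS S'_def by (simp add: sum.remove)
  also have "\<dots> \<le> h 1 + (\<Sum>p\<in>S'. (h \<circ> Suc) (card {y\<in>S'. p \<le> y}))"
    using one two by (simp add: sum_mono)
  also have "\<dots> \<le> h 1 + (\<Sum>j=1..k. (h \<circ> Suc) j)" using IH by simp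
  also have "\<dots> = (\<Sum>j=1..Suc k. h j)"
  proof -
    have "(\<Sum>j=1..Suc k. h j) = h 1 + (\<Sum>j=Suc 1..Suc k. h j)"
      by (simp add: sum.atLeast_Suc_atMost)
    also have "(\<Sum>j=Suc 1..Suc k. h j) = (\<Sum>j=1..k. h (Suc j))"
      by (rule sum.shift_bounds_cl_Suc_ivl)
    finally show ?thesis by simp
  qed
  finally show ?case using Suc.hyps(2) by simp
qed

lemma pairs_le:
  fixes U :: "'b::order set"
  assumes fU: "finite U"
  shows "2 * card {(u,v). u\<in>U \<and> v\<in>U \<and> u \<le> v} \<le> card U * (card U + 1)"
proof -
  define C where "C = {(u,v). u\<in>U \<and> v\<in>U \<and> u \<le> v}"
  define Str where "Str = {(u,v). u\<in>U \<and> v\<in>U \<and> u < v}"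
  have fUU: "finite (U \<times> U)" using fU by simp
  have CU: "C \<subseteq> U \<times> U" and SU: "Str \<subseteq> U \<times> U" unfolding C_def Str_def by auto
  have fC: "finite C" using CU fUU finite_subset by blast
  have fS: "finite Str" using SU fUU finite_subset by blast
  have c1: "C \<subseteq> (\<lambda>u. (u,u)) ` U \<union> Str" unfolding C_def Str_def by (auto simp: order.order_iff_strict)
  have "card C \<le> card ((\<lambda>u. (u,u)) ` U \<union> Str)" using c1 fU fS by (intro card_mono) auto
  also have "\<dots> \<le> card ((\<lambda>u. (u,u)) ` U) + card Str" by (rule card_Un_le)
  also have "\<dots> \<le> card U + card Str" using card_image_le[OF fU] by simp
  finally have a: "card C \<le> card U + card Str" .
  have disj: "C \<inter> prod.swap ` Str = {}" unfolding C_def Str_def by auto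
  have sw: "prod.swap ` Str \<subseteq> U \<times> U" using SU by auto
  have "card C + card (prod.swap ` Str) = card (C \<union> prod.swap ` Str)"
    using disj fC fS by (simp add: card_Un_disjoint)
  also have "\<dots> \<le> card (U \<times> U)" using CU sw fUU by (intro card_mono) auto
  finally have b: "card C + card Str \<le> card U * card U"
    by (simp add: card_image card_cartesian_product)
  show ?thesis using a b unfolding C_def[symmetric] by (simp add: algebra_simps)
qed



definition monomaps :: "'b::order set \<Rightarrow> ('b \<Rightarrow> 'b) set" where
  "monomaps S = {t \<in> S \<rightarrow>\<^sub>E S. \<forall>x\<in>S. \<forall>y\<in>S. x \<le> y \<longrightarrow> t x \<le> t y}"

lemma card_funs: "finite A \<Longrightarrow> card (A \<rightarrow>\<^sub>E B) = card B ^ card A"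
  by (simp add: card_PiE)

lemma monomaps_caseA:
  fixes S :: "'b::order set"
  assumes fin: "finite S" and zS: "z \<in> S" and bot: "\<forall>x\<in>S. z \<le> x"
    and anti: "\<forall>x\<in>S. \<forall>y\<in>S. x \<noteq> z \<longrightarrow> y \<noteq> z \<longrightarrow> x \<le> y \<longrightarrow> x = y"
  shows "card (monomaps S) \<le> card S ^ (card S - 1) + (card S - 1)"
proof -
  define A where "A = (\<lambda>f. f(z := z)) ` ((S - {z}) \<rightarrow>\<^sub>E S)"
  define B where "B = (\<lambda>p. restrict (\<lambda>_. p) S) ` (S - {z})"
  have sub: "monomaps S \<subseteq> A \<union> B"
  proof
    fix t assume t: "t \<in> monomaps S"
    hence tP: "t \<in> S \<rightarrow>\<^sub>E S" and tm: "\<forall>x\<in>S. \<forall>y\<in>S. x \<le> y \<longrightarrow> t x \<le> t y"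
      unfolding monomaps_def by auto
    show "t \<in> A \<union> B"
    proof (cases "t z = z")
      case True
      have "restrict t (S - {z}) \<in> (S - {z}) \<rightarrow>\<^sub>E S" using tP by auto
      moreover have "(restrict t (S - {z}))(z := z) = t"
      proof
        fix x show "((restrict t (S - {z}))(z := z)) x = t x"
          using True tP by (cases "x \<in> S") (auto simp: PiE_def extensional_def)
      qed
      ultimately have "t \<in> A" unfolding A_def by (metis image_eqI)
      then show ?thesis by simp
    next
      case False
      define p where "p = t z"
      have pS: "p \<in> S" using tP zS p_def by auto
      have pz: "p \<noteq> z" using False p_def by simp
      have const: "t x = p" if xS: "x \<in> S" for x
      proof -
        have le: "p \<le> t x" using tm zS xS bot p_def by auto
        have txS: "t x \<in> S" using tP xS by auto
        have "t x \<noteq> z"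
        proof
          assume "t x = z"
          then have "p \<le> z" using le by simp
          moreover have "z \<le> p" using bot pS by auto
          ultimately show False using pz by simp
        qed
        then show ?thesis using anti pS txS pz le by metis
      qed
      have "t = restrict (\<lambda>_. p) S"
      proof
        fix x show "t x = restrict (\<lambda>_. p) S x"
          using const tP by (cases "x \<in> S") (auto simp: PiE_def extensional_def)
      qed
      then have "t \<in> B" unfolding B_def using pS pz by auto
      then show ?thesis by simp
    qed
  qed
  have fA: "finite A" unfolding A_def using fin by (simp add: finite_PiE)
  have fB: "finite B" unfolding B_def using fin by simp
  have "card (monomaps S) \<le> card (A \<union> B)" using sub fA fB by (intro card_mono) auto
  also have "\<dots> \<le> card A + card B" by (rule card_Un_le)
  also have "card A \<le> card ((S - {z}) \<rightarrow>\<^sub>E S)" unfolding A_def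
    using fin by (intro card_image_le) (simp add: finite_PiE)
  also have "card ((S - {z}) \<rightarrow>\<^sub>E S) = card S ^ (card S - 1)"
    using fin zS by (simp add: card_funs)
  also have "card B \<le> card (S - {z})" unfolding B_def using fin by (intro card_image_le) simp
  also have "card (S - {z}) = card S - 1" using fin zS by simp
  finally show ?thesis by simp
qed

lemma monomaps_caseB:
  fixes S :: "'b::order set"
  assumes fin: "finite S" and zS: "z \<in> S" and bot: "\<forall>x\<in>S. z \<le> x"
    and aS: "a \<in> S" and bS: "b \<in> S" and az: "a \<noteq> z" and bz: "b \<noteq> z" and ab: "a \<noteq> b"
    and aleb: "a \<le> b"
  shows "card (monomaps S) \<le> card S ^ (card S - 1) + (card S - 1)"
proof -
  define n where "n = card S"
  have n3: "3 \<le> n"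
  proof -
    have "{z,a,b} \<subseteq> S" using zS aS bS by auto
    then have "card {z,a,b} \<le> card S" using fin by (rule card_mono[rotated])
    moreover have "card {z,a,b} = 3" using az bz ab by auto
    ultimately show ?thesis unfolding n_def by simp
  qed
  define U where "U p = {x\<in>S. p \<le> x}" for p
  define C where "C p = {(u,v). u\<in>U p \<and> v\<in>U p \<and> u \<le> v}" for p
  define W where "W = S - {z,a,b}"
  define G where "G p = {t \<in> monomaps S. t z = p}" for p
  have fW: "finite W" using fin W_def by simp
  have cW: "card W = n - 3"
  proof -
    have "card W = card S - card {z,a,b}" unfolding W_def using fin zS aS bS
      by (subst card_Diff_subset) auto
    moreover have "card {z,a,b} = 3" using az bz ab by auto
    ultimately show ?thesis unfolding n_def by simp
  qed
  have fU: "finite (U p)" for p using fin U_def by simp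
  have fC: "finite (C p)" for p
  proof -
    have "C p \<subseteq> U p \<times> U p" unfolding C_def by auto
    then show ?thesis using fU finite_subset by blast
  qed
  have cover: "monomaps S \<subseteq> (\<Union>p\<in>S. G p)"
  proof
    fix t assume t: "t \<in> monomaps S"
    then have "t z \<in> S" unfolding monomaps_def using zS by auto
    then show "t \<in> (\<Union>p\<in>S. G p)" using t unfolding G_def by auto
  qed
  have cardG: "card (G p) \<le> card (C p) * card (U p) ^ (n - 3)" if pS: "p \<in> S" for p
  proof -
    define \<phi> where "\<phi> t = ((t a, t b), restrict t W)" for t :: "'b \<Rightarrow> 'b"
    have img: "\<phi> ` G p \<subseteq> C p \<times> (W \<rightarrow>\<^sub>E U p)"
    proof
      fix y assume "y \<in> \<phi> ` G p"
      then obtain t where tG: "t \<in> G p" and y: "y = \<phi> t" by auto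
      from tG have tP: "t \<in> S \<rightarrow>\<^sub>E S" and tm: "\<forall>x\<in>S. \<forall>y\<in>S. x \<le> y \<longrightarrow> t x \<le> t y"
        and tz: "t z = p" unfolding G_def monomaps_def by auto
      have ge: "t x \<in> U p" if "x \<in> S" for x
        using tm that zS bot tz tP unfolding U_def by auto
      have "(t a, t b) \<in> C p" using ge aS bS tm aleb unfolding C_def by auto
      moreover have "restrict t W \<in> W \<rightarrow>\<^sub>E U p" using ge W_def by auto
      ultimately show "y \<in> C p \<times> (W \<rightarrow>\<^sub>E U p)" using y \<phi>_def by simp
    qed
    have inj: "inj_on \<phi> (G p)"
    proof (rule inj_onI)
      fix t s assume tG: "t \<in> G p" and sG: "s \<in> G p" and eq: "\<phi> t = \<phi> s"
      from tG have tP: "t \<in> S \<rightarrow>\<^sub>E S" and tz: "t z = p" unfolding G_def monomaps_def by auto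
      from sG have sP: "s \<in> S \<rightarrow>\<^sub>E S" and sz: "s z = p" unfolding G_def monomaps_def by auto
      from eq have ta: "t a = s a" and tb: "t b = s b" and tw: "restrict t W = restrict s W"
        unfolding \<phi>_def by auto
      show "t = s"
      proof
        fix x
        show "t x = s x"
        proof (cases "x \<in> S")
          case False then show ?thesis using tP sP by (auto simp: PiE_def extensional_def)
        next
          case True
          show ?thesis
          proof (cases "x \<in> W")
            case True then show ?thesis using tw by (metis restrict_apply')
          next
            case False
            then have "x = z \<or> x = a \<or> x = b" using \<open>x \<in> S\<close> W_def by auto
            then show ?thesis using ta tb tz sz by auto
          qed
        qed
      qed
    qed
    have "card (G p) \<le> card (C p \<times> (W \<rightarrow>\<^sub>E U p))"
      using card_inj_on_le[OF inj img] fC fU fW by (simp add: finite_PiE)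
    also have "\<dots> = card (C p) * card (U p) ^ (n - 3)"
      using fW cW by (simp add: card_cartesian_product card_funs)
    finally show ?thesis .
  qed
  have finG: "finite (G p)" for p
  proof -
    have "G p \<subseteq> S \<rightarrow>\<^sub>E S" unfolding G_def monomaps_def by auto
    then show ?thesis using fin finite_subset by (blast intro: finite_PiE)
  qed
  define h where "h j = (j+1) * j^(n-2)" for j :: nat
  have monoh: "mono h" unfolding h_def
    by (rule monoI) (intro mult_le_mono power_mono; simp)
  have "card (monomaps S) \<le> card (\<Union>p\<in>S. G p)"
    using cover fin finG by (intro card_mono) auto
  also have "\<dots> \<le> (\<Sum>p\<in>S. card (G p))" by (rule card_UN_le[OF fin])
  also have "\<dots> \<le> (\<Sum>p\<in>S. card (C p) * card (U p) ^ (n - 3))" using cardG by (rule sum_mono)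
  finally have c1: "card (monomaps S) \<le> (\<Sum>p\<in>S. card (C p) * card (U p) ^ (n - 3))" .
  have trm: "2 * (card (C p) * card (U p) ^ (n - 3)) \<le> h (card (U p))" for p
  proof -
    have "2 * card (C p) \<le> card (U p) * (card (U p) + 1)"
      using pairs_le[OF fU[of p]] unfolding C_def by simp
    then have "2 * card (C p) * card (U p) ^ (n - 3) \<le> card (U p) * (card (U p) + 1) * card (U p) ^ (n - 3)"
      by (rule mult_right_mono) simp
    moreover have "card (U p) * (card (U p) + 1) * card (U p) ^ (n - 3) = h (card (U p))"
    proof -
      have "n - 2 = Suc (n - 3)" using n3 by simp
      then show ?thesis unfolding h_def by (simp add: algebra_simps)
    qed
    ultimately show ?thesis by (simp add: algebra_simps)
  qed
  have "2 * card (monomaps S) \<le> (\<Sum>p\<in>S. 2 * (card (C p) * card (U p) ^ (n - 3)))"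
    using c1 by (simp add: sum_distrib_left[symmetric])
  also have "\<dots> \<le> (\<Sum>p\<in>S. h (card {x\<in>S. p \<le> x}))" using trm unfolding U_def by (intro sum_mono) auto
  also have "\<dots> \<le> (\<Sum>j=1..n. h j)" using rearr[OF fin monoh] n_def by simp
  also have "\<dots> \<le> 2 * (n^(n-1) + n - 1)" using analytic[OF n3] unfolding h_def by simp
  finally show ?thesis unfolding n_def using n3 n_def by simp
qed

lemma monomaps_card:
  fixes S :: "'b::order set"
  assumes fin: "finite S" and zS: "z \<in> S" and bot: "\<forall>x\<in>S. z \<le> x"
  shows "card (monomaps S) \<le> card S ^ (card S - 1) + (card S - 1)"
proof (cases "\<forall>x\<in>S. \<forall>y\<in>S. x \<noteq> z \<longrightarrow> y \<noteq> z \<longrightarrow> x \<le> y \<longrightarrow> x = y")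
  case True then show ?thesis using monomaps_caseA[OF fin zS bot] by blast
next
  case False
  then obtain a b where "a \<in> S" "b \<in> S" "a \<noteq> z" "b \<noteq> z" "a \<le> b" "a \<noteq> b" by blast
  then show ?thesis using monomaps_caseB[OF fin zS bot] by blast
qed



lemma lquot_append: "lquot (u @ v) L = lquot v (lquot u L)"
  unfolding lquot_def by simp

lemma lquot_in_quotients: "lquot w L \<in> quotients L"
  unfolding quotients_def by auto

lemma quotients_closed: "q \<in> quotients L \<Longrightarrow> lquot x q \<in> quotients L"
  unfolding quotients_def by (auto simp: lquot_append[symmetric])

lemma li_bound:
  fixes L :: "'a list set"
  assumes li: "left_ideal L" and fin: "finite (quotients L)"
  shows "synt_semigroup_size L \<le> card (quotients L) ^ (card (quotients L) - 1) + (card (quotients L) - 1)"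
proof -
  define Q where "Q = quotients L"
  define F where "F x = restrict (\<lambda>q. lquot x q) Q" for x :: "'a list"
  define A where "A = {x :: 'a list. x \<noteq> []}"
  define r where "r = synt_cong L"
  have eqv: "equiv A r"
    unfolding equiv_def refl_on_def sym_def trans_def r_def synt_cong_def A_def by auto
  have Fcong: "(x, y) \<in> r" if "x \<in> A" "y \<in> A" "F x = F y" for x y
  proof -
    have "(u @ x @ v \<in> L) \<longleftrightarrow> (u @ y @ v \<in> L)" for u v
    proof -
      have uQ: "lquot u L \<in> Q" unfolding Q_def by (rule lquot_in_quotients)
      have "F x (lquot u L) = F y (lquot u L)" using that by simp
      then have "lquot x (lquot u L) = lquot y (lquot u L)" using uQ unfolding F_def by simp
      then show ?thesis unfolding lquot_def by (metis mem_Collect_eq)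
    qed
    then show ?thesis using that unfolding r_def synt_cong_def A_def by auto
  qed
  define g where "g v = r `` {SOME x. x \<in> A \<and> F x = v}" for v
  have quot: "A // r \<subseteq> g ` (F ` A)"
  proof
    fix c assume "c \<in> A // r"
    then obtain x where xA: "x \<in> A" and c: "c = r `` {x}" unfolding quotient_def by auto
    define y where "y = (SOME y. y \<in> A \<and> F y = F x)"
    have "y \<in> A \<and> F y = F x" unfolding y_def by (rule someI[of _ x]) (simp add: xA)
    then have "(x, y) \<in> r" using Fcong xA by auto
    then have "r `` {x} = r `` {y}" using eqv equiv_class_eq by metis
    then have "c = g (F x)" unfolding g_def y_def c by simp
    then show "c \<in> g ` (F ` A)" using xA by auto
  qed
  have zQ: "L \<in> Q" unfolding Q_def using lquot_in_quotients[of "[]" L] by (simp add: lquot_def)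
  have bot: "\<forall>q\<in>Q. L \<subseteq> q"
  proof
    fix q assume "q \<in> Q"
    then obtain w where q: "q = lquot w L" unfolding Q_def quotients_def by auto
    show "L \<subseteq> q"
    proof
      fix x assume "x \<in> L"
      then have "w @ x \<in> {u @ v | u v. v \<in> L}" by auto
      then have "w @ x \<in> L" using li unfolding left_ideal_def by blast
      then show "x \<in> q" unfolding q lquot_def by simp
    qed
  qed
  have Fmono: "F ` A \<subseteq> monomaps Q"
  proof
    fix t assume "t \<in> F ` A"
    then obtain x where t: "t = F x" by auto
    have "t \<in> Q \<rightarrow>\<^sub>E Q" unfolding t F_def Q_def using quotients_closed by auto
    moreover have "\<forall>q\<in>Q. \<forall>q'\<in>Q. q \<le> q' \<longrightarrow> t q \<le> t q'"
      unfolding t F_def lquot_def by auto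
    ultimately show "t \<in> monomaps Q" unfolding monomaps_def by simp
  qed
  have finM: "finite (monomaps Q)"
  proof -
    have "monomaps Q \<subseteq> Q \<rightarrow>\<^sub>E Q" unfolding monomaps_def by auto
    then show ?thesis using fin Q_def finite_subset by (blast intro: finite_PiE)
  qed
  have "synt_semigroup_size L = card (A // r)" unfolding synt_semigroup_size_def A_def r_def by simp
  also have "\<dots> \<le> card (g ` (F ` A))"
    using quot finM Fmono by (intro card_mono) (auto intro: finite_subset)
  also have "\<dots> \<le> card (F ` A)"
    using finM Fmono by (intro card_image_le) (auto intro: finite_subset)
  also have "\<dots> \<le> card (monomaps Q)" using finM Fmono by (intro card_mono)
  also have "\<dots> \<le> card Q ^ (card Q - 1) + (card Q - 1)"
    using fin zQ bot unfolding Q_def by (intro monomaps_card) auto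
  finally show ?thesis unfolding Q_def .
qed

lemma lquot_compl: "lquot w (- L) = - lquot w L"
  unfolding lquot_def by auto

lemma quotients_compl: "quotients (- L) = uminus ` quotients L"
  unfolding quotients_def by (auto simp: lquot_compl)

lemma synt_cong_compl: "synt_cong (- L) = synt_cong L"
  unfolding synt_cong_def by auto

lemma suffix_to_left:
  fixes L :: "'a list set"
  assumes sc: "suffix_closed L" and ne: "L \<noteq> UNIV"
  shows "left_ideal (- L)"
  unfolding left_ideal_def
proof
  show "- L \<noteq> {}" using ne by auto
  show "- L = {u @ v |u v. v \<in> - L}"
  proof
    show "- L \<subseteq> {u @ v |u v. v \<in> - L}" by force
    show "{u @ v |u v. v \<in> - L} \<subseteq> - L" using sc unfolding suffix_closed_def by auto
  qed
qed

theorem lemma5: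
  fixes L :: "('a::finite) list set" and n :: nat
  assumes "n \<ge> 3"
    and "left_ideal L \<or> suffix_closed L"
    and "finite (quotients L)" and "card (quotients L) = n"
  shows "synt_semigroup_size L \<le> n ^ (n - 1) + n - 1"
  using assms(2)
proof
  assume "left_ideal L"
  then show ?thesis using li_bound[of L] assms by simp
next
  assume sc: "suffix_closed L"
  have ne: "L \<noteq> UNIV"
  proof
    assume "L = UNIV"
    then have "quotients L = {UNIV}" unfolding quotients_def lquot_def by auto
    then show False using assms by simp
  qed
  have li: "left_ideal (- L)" by (rule suffix_to_left[OF sc ne])
  have inj: "inj_on uminus (quotients L)" by (rule inj_onI) simp
  have q: "quotients (- L) = uminus ` quotients L" by (rule quotients_compl)
  have fin: "finite (quotients (- L))" using q assms by simp
  have c: "card (quotients (- L)) = n" using q assms card_image[OF inj] by simp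
  have "synt_semigroup_size L = synt_semigroup_size (- L)"
    unfolding synt_semigroup_size_def by (simp add: synt_cong_compl)
  also have "\<dots> \<le> n ^ (n - 1) + (n - 1)" using li_bound[OF li fin] c by simp
  finally show ?thesis using assms by simp
qed


end
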